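(* Let $0<\alpha<1$, $\sigma=1-\alpha/2$, $l,T>0$, $N,M\ge1$, $h=l/N$, $x_i=ih$, $\tau=T/M$, $t_j=j\tau$, $t_{j+\sigma}=(j+\sigma)\tau$. Let $k(t)\ge c_1>0$, $q(t)\ge0$ be continuous on $[0,T]$, $f$ continuous on $[0,l]\times[0,T]$, and $u_0$ a function on $[0,l]$. Set $a^{j+1}=k(t_{j+\sigma})$, $d^{j+1}=q(t_{j+\sigma})$, $\varphi_i^{j+1}=f(x_i,t_{j+\sigma})$ ($0\le i\le N$). Let $y$ solve $$\Delta^\alpha_{0t_{j+\sigma}}\mathcal H_hy_i=a^{j+1}y^{(\sigma)}_{\bar xx,i}-d^{j+1}\mathcal H_hy_i^{(\sigma)}+\mathcal H_h\varphi_i^{j+1},\quad i=1,\dots,N-1,\ j=0,\dots,M-1,$$ $$y_0^j=y_N^j=0,\qquad y_i^0=u_0(x_i).$$ Then the scheme is unconditionally stable and for every $j=0,\dots,M-1$ $$\|\mathcal H_hy^{j+1}\|_0^2\le\|\mathcal H_hy^0\|_0^2+\frac{l^2T^\alpha\Gamma(1-\alpha)}{c_1}\max_{1\le j\le M}\|\mathcal H_h\varphi^j\|_0^2 .$$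
   Context: $(y,v)=\sum_{i=1}^{N-1}y_iv_ih$, $\|y\|_0^2=(y,y)$; $v_{\bar xx,i}=(v_{i+1}-2v_i+v_{i-1})/h^2$; $\mathcal H_hv_i=v_i+\frac{h^2}{12}v_{\bar xx,i}=\frac{v_{i-1}+10v_i+v_{i+1}}{12}$ for $i=1,\dots,N-1$; $y^{(\sigma)}=\sigma y^{j+1}+(1-\sigma)y^j$. The discrete fractional derivative of a mesh function $w$ is $\Delta^\alpha_{0t_{j+\sigma}}w=\frac{\tau^{1-\alpha}}{\Gamma(2-\alpha)}\sum_{s=0}^{j}c_{j-s}\frac{w^{s+1}-w^s}{\tau}$, with $a_0=\sigma^{1-\alpha}$, $a_m=(m+\sigma)^{1-\alpha}-(m-1+\sigma)^{1-\alpha}$ ($m\ge1$), $b_m=\frac{1}{2-\alpha}[(m+\sigma)^{2-\alpha}-(m-1+\sigma)^{2-\alpha}]-\frac12[(m+\sigma)^{1-\alpha}+(m-1+\sigma)^{1-\alpha}]$ ($m\ge1$); for $j=0$, $c_0=a_0$; for $j\ge1$, $c_0=a_0+b_1$, $c_s=a_s+b_{s+1}-b_s$ ($1\le s\le j-1$), $c_j=a_j-b_j$. *)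

theory Defs
  imports "HOL-Analysis.Analysis"
begin

text \<open>Mesh functions in space are maps nat \<Rightarrow> real (index i = 0..N);
  time-dependent mesh functions are maps nat \<Rightarrow> nat \<Rightarrow> real, indexed first by
  the time level j and then by the space index i.\<close>

definition dinner :: "real \<Rightarrow> nat \<Rightarrow> (nat \<Rightarrow> real) \<Rightarrow> (nat \<Rightarrow> real) \<Rightarrow> real" where
  "dinner h N y v = (\<Sum>i = 1..N - 1. y i * v i * h)"

definition norm0sq :: "real \<Rightarrow> nat \<Rightarrow> (nat \<Rightarrow> real) \<Rightarrow> real" where
  "norm0sq h N y = dinner h N y y"

definition dxx :: "real \<Rightarrow> (nat \<Rightarrow> real) \<Rightarrow> nat \<Rightarrow> real" where
  "dxx h v i = (v (i + 1) - 2 * v i + v (i - 1)) / h ^ 2"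

text \<open>Only used for i \<ge> 1.\<close>
definition Hh :: "real \<Rightarrow> (nat \<Rightarrow> real) \<Rightarrow> nat \<Rightarrow> real" where
  "Hh h v i = v i + h ^ 2 / 12 * dxx h v i"

definition coef_a :: "real \<Rightarrow> real \<Rightarrow> nat \<Rightarrow> real" where
  "coef_a \<alpha> \<sigma> m = (if m = 0 then \<sigma> powr (1 - \<alpha>)
     else (real m + \<sigma>) powr (1 - \<alpha>) - (real m - 1 + \<sigma>) powr (1 - \<alpha>))"

definition coef_b :: "real \<Rightarrow> real \<Rightarrow> nat \<Rightarrow> real" where
  "coef_b \<alpha> \<sigma> m = 1 / (2 - \<alpha>) * ((real m + \<sigma>) powr (2 - \<alpha>) - (real m - 1 + \<sigma>) powr (2 - \<alpha>))
     - 1 / 2 * ((real m + \<sigma>) powr (1 - \<alpha>) + (real m - 1 + \<sigma>) powr (1 - \<alpha>))"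

definition coef_c :: "real \<Rightarrow> real \<Rightarrow> nat \<Rightarrow> nat \<Rightarrow> real" where
  "coef_c \<alpha> \<sigma> j s =
     (if j = 0 then coef_a \<alpha> \<sigma> 0
      else if s = 0 then coef_a \<alpha> \<sigma> 0 + coef_b \<alpha> \<sigma> 1
      else if s < j then coef_a \<alpha> \<sigma> s + coef_b \<alpha> \<sigma> (s + 1) - coef_b \<alpha> \<sigma> s
      else coef_a \<alpha> \<sigma> j - coef_b \<alpha> \<sigma> j)"

text \<open>Discrete fractional derivative at t_{j+\<sigma>} of a time mesh function w.\<close>
definition frac_deriv :: "real \<Rightarrow> real \<Rightarrow> real \<Rightarrow> nat \<Rightarrow> (nat \<Rightarrow> real) \<Rightarrow> real" where
  "frac_deriv \<alpha> \<sigma> \<tau> j w =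
     \<tau> powr (1 - \<alpha>) / Gamma (2 - \<alpha>) *
       (\<Sum>s = 0..j. coef_c \<alpha> \<sigma> j (j - s) * (w (s + 1) - w s) / \<tau>)"

end

theory Submission
  imports Defs
begin



definition ff :: "real \<Rightarrow> real \<Rightarrow> real" where "ff \<alpha> x = x powr (1 - \<alpha>)"
definition PP :: "real \<Rightarrow> real \<Rightarrow> real" where "PP \<alpha> x = x powr (2 - \<alpha>) / (2 - \<alpha>)"
definition fd :: "real \<Rightarrow> real \<Rightarrow> real" where "fd \<alpha> x = (1 - \<alpha>) * x powr (- \<alpha>)"
definition fdd :: "real \<Rightarrow> real \<Rightarrow> real" where "fdd \<alpha> x = (1 - \<alpha>) * (- \<alpha>) * x powr (- \<alpha> - 1)"

lemma D_PP: assumes "x > 0" "\<alpha> < 1" shows "(PP \<alpha> has_real_derivative ff \<alpha> x) (at x)"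
proof -
  have "((\<lambda>z. z powr (2 - \<alpha>)) has_real_derivative (2 - \<alpha>) * x powr (2 - \<alpha> - 1)) (at x)"
    by (rule has_real_derivative_powr) (use assms in auto)
  then have "((\<lambda>z. z powr (2 - \<alpha>) / (2 - \<alpha>)) has_real_derivative (2 - \<alpha>) * x powr (2 - \<alpha> - 1) / (2 - \<alpha>)) (at x)"
    by (rule DERIV_cdivide)
  moreover have "(2 - \<alpha>) * x powr (2 - \<alpha> - 1) / (2 - \<alpha>) = ff \<alpha> x"
    using assms by (simp add: ff_def diff_diff_eq add.commute)
  ultimately show ?thesis unfolding PP_def by simp
qed

lemma D_ff: assumes "x > 0" shows "(ff \<alpha> has_real_derivative fd \<alpha> x) (at x)"
proof -
  have "((\<lambda>z. z powr (1 - \<alpha>)) has_real_derivative (1 - \<alpha>) * x powr (1 - \<alpha> - 1)) (at x)"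
    by (rule has_real_derivative_powr) (use assms in auto)
  then show ?thesis unfolding ff_def fd_def by simp
qed

lemma D_fd: assumes "x > 0" shows "(fd \<alpha> has_real_derivative fdd \<alpha> x) (at x)"
proof -
  have "((\<lambda>z. z powr (- \<alpha>)) has_real_derivative (- \<alpha>) * x powr (- \<alpha> - 1)) (at x)"
    by (rule has_real_derivative_powr) (use assms in auto)
  then have "((\<lambda>z. (1 - \<alpha>) * z powr (- \<alpha>)) has_real_derivative (1 - \<alpha>) * ((- \<alpha>) * x powr (- \<alpha> - 1))) (at x)"
    by (rule DERIV_cmult)
  then show ?thesis unfolding fdd_def fd_def by (simp add: mult.assoc)
qed

lemma fd_anti: assumes "0 < x" "x \<le> y" "0 < \<alpha>" "\<alpha> < 1" shows "fd \<alpha> y \<le> fd \<alpha> x"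
  unfolding fd_def using assms powr_mono2'[of "-\<alpha>" x y] by (intro mult_left_mono) auto

lemma fdd_mono: assumes "0 < x" "x \<le> y" "0 < \<alpha>" "\<alpha> < 1" shows "fdd \<alpha> x \<le> fdd \<alpha> y"
proof -
  have "y powr (-\<alpha>-1) \<le> x powr (-\<alpha>-1)" using assms powr_mono2'[of "-\<alpha>-1" x y] by auto
  moreover have "(1-\<alpha>)*(-\<alpha>) \<le> 0" using assms by (simp add: mult_nonneg_nonpos)
  ultimately show ?thesis unfolding fdd_def by (rule mult_left_mono_neg)
qed

lemma ff_mono: assumes "0 \<le> x" "x \<le> y" "\<alpha> < 1" shows "ff \<alpha> x \<le> ff \<alpha> y"
  unfolding ff_def using assms by (intro powr_mono2) auto

lemma slope_bounds:
  fixes g g' :: "real \<Rightarrow> real"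
  assumes "a < b" and der: "\<And>t. a \<le> t \<Longrightarrow> t \<le> b \<Longrightarrow> (g has_real_derivative g' t) (at t)"
    and anti: "\<And>s t. a \<le> s \<Longrightarrow> s \<le> t \<Longrightarrow> t \<le> b \<Longrightarrow> g' t \<le> g' s"
  shows "g' b * (b - a) \<le> g b - g a" "g b - g a \<le> g' a * (b - a)"
proof -
  obtain z where z: "a < z" "z < b" "g b - g a = (b - a) * g' z"
    using MVT2[OF assms(1) der] by blast
  have "g' b \<le> g' z" "g' z \<le> g' a" using anti z by auto
  then show "g' b * (b - a) \<le> g b - g a" "g b - g a \<le> g' a * (b - a)"
    using z assms(1) by (auto simp: mult.commute intro: mult_right_mono)
qed

lemma int_cmp:
  fixes P Q p q :: "real \<Rightarrow> real"
  assumes "u \<le> v" and "\<And>t. u \<le> t \<Longrightarrow> t \<le> v \<Longrightarrow> (P has_real_derivative p t) (at t)"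
    and "\<And>t. u \<le> t \<Longrightarrow> t \<le> v \<Longrightarrow> (Q has_real_derivative q t) (at t)"
    and "\<And>t. u \<le> t \<Longrightarrow> t \<le> v \<Longrightarrow> p t \<le> q t"
  shows "P v - P u \<le> Q v - Q u"
proof -
  have "(\<lambda>t. Q t - P t) u \<le> (\<lambda>t. Q t - P t) v"
  proof (rule DERIV_nonneg_imp_nondecreasing[OF assms(1)])
    fix t assume "u \<le> t" "t \<le> v"
    then show "\<exists>y. DERIV (\<lambda>t. Q t - P t) t :> y \<and> 0 \<le> y"
      using assms by (intro exI[of _ "q t - p t"]) (auto intro!: derivative_intros)
  qed
  then show ?thesis by simp
qed

lemma chord_below:
  fixes g g' :: "real \<Rightarrow> real"
  assumes der: "\<And>t. a \<le> t \<Longrightarrow> t \<le> a + 1 \<Longrightarrow> (g has_real_derivative g' t) (at t)"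
    and anti: "\<And>s t. a \<le> s \<Longrightarrow> s \<le> t \<Longrightarrow> t \<le> a + 1 \<Longrightarrow> g' t \<le> g' s"
    and t: "a \<le> t" "t \<le> a + 1"
  shows "g a + (t - a) * (g (a + 1) - g a) \<le> g t"
proof (cases "t = a \<or> t = a + 1")
  case True then show ?thesis by auto
next
  case False
  then have t': "a < t" "t < a + 1" using t by auto
  have 1: "g' t * (t - a) \<le> g t - g a"
    by (rule slope_bounds(1)[OF t'(1)]) (use der anti t' in auto)
  have 2: "g (a + 1) - g t \<le> g' t * (a + 1 - t)"
    by (rule slope_bounds(2)[OF t'(2)]) (use der anti t' in auto)
  define D where "D = g t - g a"
  define u where "u = t - a"
  have u: "0 < u" "u < 1" using t' by (auto simp: u_def)
  have "u * (g (a + 1) - g a) = u * D + u * (g (a + 1) - g t)" by (simp add: D_def algebra_simps)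
  also have "u * (g (a + 1) - g t) \<le> u * (g' t * (1 - u))"
    using 2 u by (intro mult_left_mono) (auto simp: u_def algebra_simps)
  also have "u * (g' t * (1 - u)) = (1 - u) * (g' t * u)" by simp
  also have "\<dots> \<le> (1 - u) * D" using 1 u by (intro mult_left_mono) (auto simp: u_def D_def)
  finally have "u * (g (a + 1) - g a) \<le> D" by (simp add: algebra_simps)
  then show ?thesis by (simp add: u_def D_def)
qed

lemma midpoint_conc:
  fixes g g' :: "real \<Rightarrow> real"
  assumes der: "\<And>t. a \<le> t \<Longrightarrow> t \<le> a + 2 \<Longrightarrow> (g has_real_derivative g' t) (at t)"
    and anti: "\<And>s t. a \<le> s \<Longrightarrow> s \<le> t \<Longrightarrow> t \<le> a + 2 \<Longrightarrow> g' t \<le> g' s"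
  shows "g a + g (a + 2) \<le> 2 * g (a + 1)"
proof -
  have 1: "g' (a + 1) * ((a + 1) - a) \<le> g (a + 1) - g a"
    by (rule slope_bounds(1)) (use der anti in auto)
  have 2: "g (a + 1 + 1) - g (a + 1) \<le> g' (a + 1) * ((a + 1 + 1) - (a + 1))"
    by (rule slope_bounds(2)) (use der anti in auto)
  from 1 2 show ?thesis by (simp add: add.assoc)
qed

lemma trap_lower:
  fixes g g' \<Phi> :: "real \<Rightarrow> real"
  assumes derP: "\<And>t. a \<le> t \<Longrightarrow> t \<le> a + 1 \<Longrightarrow> (\<Phi> has_real_derivative g t) (at t)"
    and der: "\<And>t. a \<le> t \<Longrightarrow> t \<le> a + 1 \<Longrightarrow> (g has_real_derivative g' t) (at t)"
    and anti: "\<And>s t. a \<le> s \<Longrightarrow> s \<le> t \<Longrightarrow> t \<le> a + 1 \<Longrightarrow> g' t \<le> g' s"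
  shows "(g a + g (a + 1)) / 2 \<le> \<Phi> (a + 1) - \<Phi> a"
proof -
  define s where "s = g (a + 1) - g a"
  define P where "P = (\<lambda>t. g a * t + (t - a)^2 / 2 * s)"
  have "P (a + 1) - P a \<le> \<Phi> (a + 1) - \<Phi> a"
  proof (rule int_cmp[where p = "\<lambda>t. g a + (t - a) * s" and q = g])
    fix t assume t: "a \<le> t" "t \<le> a + 1"
    show "(P has_real_derivative g a + (t - a) * s) (at t)"
      unfolding P_def by (auto intro!: derivative_eq_intros simp: field_simps)
    show "(\<Phi> has_real_derivative g t) (at t)" using derP t by auto
    show "g a + (t - a) * s \<le> g t" unfolding s_def by (rule chord_below) (use der anti t in auto)
  qed auto
  moreover have "P (a + 1) - P a = (g a + g (a + 1)) / 2"
    by (simp add: P_def s_def field_simps power2_eq_square)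
  ultimately show ?thesis by simp
qed

lemma extrap_left:
  fixes g g' \<Phi> :: "real \<Rightarrow> real"
  assumes derP: "\<And>t. a \<le> t \<Longrightarrow> t \<le> a + 1 \<Longrightarrow> (\<Phi> has_real_derivative g t) (at t)"
    and der: "\<And>t. a \<le> t \<Longrightarrow> t \<le> a + 2 \<Longrightarrow> (g has_real_derivative g' t) (at t)"
    and anti: "\<And>s t. a \<le> s \<Longrightarrow> s \<le> t \<Longrightarrow> t \<le> a + 2 \<Longrightarrow> g' t \<le> g' s"
  shows "\<Phi> (a + 1) - \<Phi> a \<le> 3/2 * g (a + 1) - 1/2 * g (a + 2)"
proof -
  define s where "s = g (a + 2) - g (a + 1)"
  define Q where "Q = (\<lambda>t. g (a + 1) * t + (t - a - 1)^2 / 2 * s)"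
  have "\<Phi> (a + 1) - \<Phi> a \<le> Q (a + 1) - Q a"
  proof (rule int_cmp[where q = "\<lambda>t. g (a + 1) + (t - a - 1) * s" and p = g])
    fix t assume t: "a \<le> t" "t \<le> a + 1"
    show "(Q has_real_derivative g (a + 1) + (t - a - 1) * s) (at t)"
      unfolding Q_def by (auto intro!: derivative_eq_intros simp: field_simps)
    show "(\<Phi> has_real_derivative g t) (at t)" using derP t by auto
    show "g t \<le> g (a + 1) + (t - a - 1) * s"
    proof (cases "t = a + 1")
      case True then show ?thesis by simp
    next
      case False
      then have tt: "t < a + 1" using t by auto
      have 1: "g' (a + 1) * (a + 1 - t) \<le> g (a + 1) - g t"
        by (rule slope_bounds(1)[OF tt]) (use der anti t in auto)
      have 2: "g (a + 1 + 1) - g (a + 1) \<le> g' (a + 1) * (a + 1 + 1 - (a + 1))"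
        by (rule slope_bounds(2)) (use der anti t in auto)
      have "(a + 1 - t) * s \<le> (a + 1 - t) * g' (a + 1)"
        using 2 tt by (intro mult_left_mono) (auto simp: s_def add.assoc)
      with 1 show ?thesis by (simp add: algebra_simps)
    qed
  qed auto
  moreover have "Q (a + 1) - Q a = 3/2 * g (a + 1) - 1/2 * g (a + 2)"
    by (simp add: Q_def s_def field_simps power2_eq_square)
  ultimately show ?thesis by simp
qed

lemma extrap_right:
  fixes g g' \<Phi> :: "real \<Rightarrow> real"
  assumes derP: "\<And>t. a + 1 \<le> t \<Longrightarrow> t \<le> a + 2 \<Longrightarrow> (\<Phi> has_real_derivative g t) (at t)"
    and der: "\<And>t. a \<le> t \<Longrightarrow> t \<le> a + 2 \<Longrightarrow> (g has_real_derivative g' t) (at t)"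
    and anti: "\<And>s t. a \<le> s \<Longrightarrow> s \<le> t \<Longrightarrow> t \<le> a + 2 \<Longrightarrow> g' t \<le> g' s"
  shows "\<Phi> (a + 2) - \<Phi> (a + 1) \<le> 3/2 * g (a + 1) - 1/2 * g a"
proof -
  define s where "s = g (a + 1) - g a"
  define Q where "Q = (\<lambda>t. g (a + 1) * t + (t - a - 1)^2 / 2 * s)"
  have "\<Phi> (a + 2) - \<Phi> (a + 1) \<le> Q (a + 2) - Q (a + 1)"
  proof (rule int_cmp[where q = "\<lambda>t. g (a + 1) + (t - a - 1) * s" and p = g])
    fix t assume t: "a + 1 \<le> t" "t \<le> a + 2"
    show "(Q has_real_derivative g (a + 1) + (t - a - 1) * s) (at t)"
      unfolding Q_def by (auto intro!: derivative_eq_intros simp: field_simps)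
    show "(\<Phi> has_real_derivative g t) (at t)" using derP t by auto
    show "g t \<le> g (a + 1) + (t - a - 1) * s"
    proof (cases "t = a + 1")
      case True then show ?thesis by simp
    next
      case False
      then have tt: "a + 1 < t" using t by auto
      have 1: "g t - g (a + 1) \<le> g' (a + 1) * (t - (a + 1))"
        by (rule slope_bounds(2)[OF tt]) (use der anti t in auto)
      have 2: "g' (a + 1) * (a + 1 - a) \<le> g (a + 1) - g a"
        by (rule slope_bounds(1)) (use der anti t in auto)
      have "(t - a - 1) * g' (a + 1) \<le> (t - a - 1) * s"
        using 2 tt by (intro mult_left_mono) (auto simp: s_def)
      with 1 show ?thesis by (simp add: algebra_simps)
    qed
  qed (use assms in auto)
  moreover have "Q (a + 2) - Q (a + 1) = 3/2 * g (a + 1) - 1/2 * g a"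
    by (simp add: Q_def s_def field_simps power2_eq_square)
  ultimately show ?thesis by simp
qed

lemma shift_deriv:
  assumes "(g has_real_derivative d) (at (x + 1))"
  shows "((\<lambda>t. g (t + 1)) has_real_derivative d) (at x)"
proof -
  have "((\<lambda>t. t + 1) has_real_derivative 1) (at x)" by (auto intro!: derivative_eq_intros)
  from DERIV_chain2[where f = g and g = "\<lambda>t. t + 1" and x = x, OF _ this] assms show ?thesis by simp
qed

definition AA :: "real \<Rightarrow> real \<Rightarrow> real" where "AA \<alpha> x = ff \<alpha> (x + 1) - ff \<alpha> x"
definition Ad :: "real \<Rightarrow> real \<Rightarrow> real" where "Ad \<alpha> x = fd \<alpha> (x + 1) - fd \<alpha> x"
definition QQ :: "real \<Rightarrow> real \<Rightarrow> real" where "QQ \<alpha> x = PP \<alpha> (x + 1) - PP \<alpha> x"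
definition bb :: "real \<Rightarrow> real \<Rightarrow> real" where "bb \<alpha> x = QQ \<alpha> x - (ff \<alpha> x + ff \<alpha> (x + 1)) / 2"

context
  fixes \<alpha> :: real
  assumes a0: "0 < \<alpha>" and a1: "\<alpha> < 1"
begin

lemma Ad_mono: assumes "0 < x" "x \<le> y" shows "Ad \<alpha> x \<le> Ad \<alpha> y"
proof (rule DERIV_nonneg_imp_nondecreasing[OF assms(2)])
  fix t assume t: "x \<le> t" "t \<le> y"
  have "(Ad \<alpha> has_real_derivative fdd \<alpha> (t + 1) - fdd \<alpha> t) (at t)"
    unfolding Ad_def using t assms
    by (auto intro!: derivative_eq_intros shift_deriv D_fd)
  moreover have "fdd \<alpha> t \<le> fdd \<alpha> (t + 1)" using fdd_mono a0 a1 t assms by auto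
  ultimately show "\<exists>y. DERIV (Ad \<alpha>) t :> y \<and> 0 \<le> y" by (intro exI[of _ "fdd \<alpha> (t + 1) - fdd \<alpha> t"]) auto
qed

lemma D_AA: assumes "0 < t" shows "(AA \<alpha> has_real_derivative Ad \<alpha> t) (at t)"
  unfolding AA_def Ad_def using assms
  by (auto intro!: derivative_eq_intros shift_deriv D_ff)

lemma D_QQ: assumes "0 < t" shows "(QQ \<alpha> has_real_derivative AA \<alpha> t) (at t)"
  unfolding QQ_def AA_def using assms a1
  by (auto intro!: derivative_eq_intros shift_deriv D_PP)

lemma T1: assumes "0 < x" shows "0 \<le> bb \<alpha> x"
proof -
  have "(ff \<alpha> x + ff \<alpha> (x + 1)) / 2 \<le> PP \<alpha> (x + 1) - PP \<alpha> x"
    by (rule trap_lower[where g' = "fd \<alpha>"]) (use assms a0 a1 in \<open>auto intro: D_PP D_ff fd_anti\<close>)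
  then show ?thesis by (simp add: bb_def QQ_def)
qed

lemma T2: assumes "0 < x" shows "QQ \<alpha> x \<le> 3/2 * ff \<alpha> (x + 1) - 1/2 * ff \<alpha> (x + 2)"
proof -
  have "PP \<alpha> (x + 1) - PP \<alpha> x \<le> 3/2 * ff \<alpha> (x + 1) - 1/2 * ff \<alpha> (x + 2)"
    by (rule extrap_left[where g' = "fd \<alpha>"]) (use assms a0 a1 in \<open>auto intro: D_PP D_ff fd_anti\<close>)
  then show ?thesis by (simp add: QQ_def)
qed

lemma T3: assumes "0 < x" shows "QQ \<alpha> (x + 2) \<le> 3/2 * ff \<alpha> (x + 2) - 1/2 * ff \<alpha> (x + 1)"
proof -
  have "PP \<alpha> ((x + 1) + 2) - PP \<alpha> ((x + 1) + 1) \<le> 3/2 * ff \<alpha> ((x + 1) + 1) - 1/2 * ff \<alpha> (x + 1)"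
    by (rule extrap_right[where g' = "fd \<alpha>"]) (use assms a0 a1 in \<open>auto intro: D_PP D_ff fd_anti\<close>)
  then show ?thesis by (simp add: QQ_def add.assoc)
qed

lemma L4: assumes "0 < x" shows "ff \<alpha> x + ff \<alpha> (x + 2) \<le> 2 * ff \<alpha> (x + 1)"
  by (rule midpoint_conc[where g' = "fd \<alpha>"]) (use assms a0 a1 in \<open>auto intro: D_ff fd_anti\<close>)

lemma L5: assumes "0 < x" shows "2 * AA \<alpha> (x + 1) \<le> AA \<alpha> x + AA \<alpha> (x + 2)"
proof -
  have "(\<lambda>t. - AA \<alpha> t) x + (\<lambda>t. - AA \<alpha> t) (x + 2) \<le> 2 * (\<lambda>t. - AA \<alpha> t) (x + 1)"
    by (rule midpoint_conc[where g' = "\<lambda>t. - Ad \<alpha> t"])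
      (use assms in \<open>auto intro!: derivative_eq_intros D_AA Ad_mono\<close>)
  then show ?thesis by simp
qed

lemma L6: assumes "0 < x" shows "bb \<alpha> (x + 1) \<le> bb \<alpha> x"
proof -
  have "((\<lambda>t. - AA \<alpha> t) x + (\<lambda>t. - AA \<alpha> t) (x + 1)) / 2 \<le> (\<lambda>t. - QQ \<alpha> t) (x + 1) - (\<lambda>t. - QQ \<alpha> t) x"
    by (rule trap_lower[where g' = "\<lambda>t. - Ad \<alpha> t"])
      (use assms in \<open>auto intro!: derivative_eq_intros D_AA D_QQ Ad_mono\<close>)
  then have "ff \<alpha> x - ff \<alpha> (x + 1 + 1) \<le> QQ \<alpha> x * 2 - QQ \<alpha> (x + 1) * 2"
    by (simp add: AA_def)
  then show ?thesis unfolding bb_def by (simp add: field_simps)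
qed

lemma L78: assumes "0 < x" shows "fd \<alpha> (x + 1) \<le> AA \<alpha> x" "AA \<alpha> x \<le> fd \<alpha> x"
proof -
  have "fd \<alpha> (x + 1) * (x + 1 - x) \<le> ff \<alpha> (x + 1) - ff \<alpha> x"
       "ff \<alpha> (x + 1) - ff \<alpha> x \<le> fd \<alpha> x * (x + 1 - x)"
    by (rule slope_bounds; use assms a0 a1 in \<open>auto intro: D_ff fd_anti\<close>)+
  then show "fd \<alpha> (x + 1) \<le> AA \<alpha> x" "AA \<alpha> x \<le> fd \<alpha> x" by (auto simp: AA_def)
qed


lemma C_interior: assumes "0 < x"
  shows "AA \<alpha> (x + 1) + bb \<alpha> (x + 2) - bb \<alpha> (x + 1) \<le> AA \<alpha> x + bb \<alpha> (x + 1) - bb \<alpha> x"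
proof -
  have h1: "2 * QQ \<alpha> x \<le> 3 * ff \<alpha> (x + 1) - ff \<alpha> (x + 2)" using T2[OF assms] by simp
  have h2: "ff \<alpha> (x + 1) + ff \<alpha> (x + 2) \<le> 2 * QQ \<alpha> (x + 1)"
    using T1[of "x + 1"] assms by (simp add: bb_def add.assoc)
  have h3: "2 * QQ \<alpha> (x + 2) \<le> 3 * ff \<alpha> (x + 2) - ff \<alpha> (x + 1)" using T3[OF assms] by simp
  have h4: "2 * (ff \<alpha> (x + 2) - ff \<alpha> (x + 1)) \<le> ff \<alpha> (x + 1) - ff \<alpha> x + (ff \<alpha> (x + 3) - ff \<alpha> (x + 2))"
    using L5[OF assms] by (simp add: AA_def add.assoc)
  have g: "AA \<alpha> (x + 1) + bb \<alpha> (x + 2) - bb \<alpha> (x + 1) = ff \<alpha> (x + 2) - ff \<alpha> (x + 1)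
     + (QQ \<alpha> (x + 2) - (ff \<alpha> (x + 2) + ff \<alpha> (x + 3)) / 2) - (QQ \<alpha> (x + 1) - (ff \<alpha> (x + 1) + ff \<alpha> (x + 2)) / 2)"
    by (simp add: AA_def bb_def add.assoc)
  have g2: "AA \<alpha> x + bb \<alpha> (x + 1) - bb \<alpha> x = ff \<alpha> (x + 1) - ff \<alpha> x
     + (QQ \<alpha> (x + 1) - (ff \<alpha> (x + 1) + ff \<alpha> (x + 2)) / 2) - (QQ \<alpha> x - (ff \<alpha> x + ff \<alpha> (x + 1)) / 2)"
    by (simp add: AA_def bb_def add.assoc)
  show ?thesis unfolding g g2 using h1 h2 h3 h4 by (simp add: field_simps)
qed

lemma C_last: assumes "0 < x"
  shows "AA \<alpha> (x + 1) - bb \<alpha> (x + 1) \<le> AA \<alpha> x + bb \<alpha> (x + 1) - bb \<alpha> x"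
proof -
  have h1: "2 * QQ \<alpha> x \<le> 3 * ff \<alpha> (x + 1) - ff \<alpha> (x + 2)" using T2[OF assms] by simp
  have h2: "ff \<alpha> (x + 1) + ff \<alpha> (x + 2) \<le> 2 * QQ \<alpha> (x + 1)"
    using T1[of "x + 1"] assms by (simp add: bb_def add.assoc)
  have h4: "ff \<alpha> x + ff \<alpha> (x + 2) \<le> 2 * ff \<alpha> (x + 1)" using L4[OF assms] by simp
  have g: "AA \<alpha> (x + 1) - bb \<alpha> (x + 1) = ff \<alpha> (x + 2) - ff \<alpha> (x + 1)
     - (QQ \<alpha> (x + 1) - (ff \<alpha> (x + 1) + ff \<alpha> (x + 2)) / 2)"
    by (simp add: AA_def bb_def add.assoc)
  have g2: "AA \<alpha> x + bb \<alpha> (x + 1) - bb \<alpha> x = ff \<alpha> (x + 1) - ff \<alpha> x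
     + (QQ \<alpha> (x + 1) - (ff \<alpha> (x + 1) + ff \<alpha> (x + 2)) / 2) - (QQ \<alpha> x - (ff \<alpha> x + ff \<alpha> (x + 1)) / 2)"
    by (simp add: AA_def bb_def add.assoc)
  show ?thesis unfolding g g2 using h1 h2 h4 by (simp add: field_simps)
qed

lemma C_lastlow: assumes "0 < x"
  shows "fd \<alpha> (x + 1) / 2 \<le> AA \<alpha> x - bb \<alpha> x"
proof -
  have h1: "2 * QQ \<alpha> x \<le> 3 * ff \<alpha> (x + 1) - ff \<alpha> (x + 2)" using T2[OF assms] by simp
  have h2: "ff \<alpha> (x + 1) \<le> ff \<alpha> (x + 2)" using ff_mono[of "x+1" "x+2" \<alpha>] assms a1 by simp
  have h3: "fd \<alpha> (x + 1) \<le> ff \<alpha> (x + 1) - ff \<alpha> x" using L78(1)[OF assms] by (simp add: AA_def)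
  show ?thesis unfolding AA_def bb_def using h1 h2 h3 by (simp add: field_simps)
qed

end


lemma coef_a_eq: assumes "1 \<le> m" shows "coef_a \<alpha> \<sigma> m = AA \<alpha> (real m - 1 + \<sigma>)"
proof -
  have "real m - 1 + \<sigma> + 1 = real m + \<sigma>" by simp
  then show ?thesis using assms by (simp add: coef_a_def AA_def ff_def)
qed

lemma coef_b_eq: assumes "1 \<le> m" shows "coef_b \<alpha> \<sigma> m = bb \<alpha> (real m - 1 + \<sigma>)"
proof -
  have "real m - 1 + \<sigma> + 1 = real m + \<sigma>" by simp
  then show ?thesis using assms by (simp add: coef_b_def bb_def QQ_def PP_def ff_def diff_divide_distrib)
qed

lemma coef_facts:
  assumes a0: "0 < \<alpha>" and a1: "\<alpha> < 1" and sg: "\<sigma> = 1 - \<alpha> / 2"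
  shows "\<And>j s. s < j \<Longrightarrow> coef_c \<alpha> \<sigma> j (s + 1) \<le> coef_c \<alpha> \<sigma> j s"
    and "\<And>j. (1 - \<alpha>) / 2 * (real j + \<sigma>) powr (- \<alpha>) \<le> coef_c \<alpha> \<sigma> j j"
    and "\<And>j. 1 \<le> j \<Longrightarrow> \<sigma>\<^sup>2 * coef_c \<alpha> \<sigma> j 1 \<le> (1 - \<alpha>) * coef_c \<alpha> \<sigma> j 0"
proof -
  have s0: "0 < \<sigma>" "\<sigma> \<le> 1" "1 - \<alpha> \<le> \<sigma>" using a0 a1 sg by auto
  have pw: "\<sigma> powr (1 - \<alpha>) = \<sigma> * \<sigma> powr (- \<alpha>)"
    using s0 powr_add[of \<sigma> 1 "- \<alpha>"] by simp
  have pwpos: "0 < \<sigma> powr (- \<alpha>)" using s0 by simp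
  have xpos: "\<And>s. 1 \<le> s \<Longrightarrow> 0 < real s - 1 + \<sigma>" using s0 by auto
  have c0: "\<And>j. 1 \<le> j \<Longrightarrow> coef_c \<alpha> \<sigma> j 0 = \<sigma> powr (1 - \<alpha>) + bb \<alpha> \<sigma>"
    by (simp add: coef_c_def coef_b_eq coef_a_def)
  have B0: "\<And>j. 1 \<le> j \<Longrightarrow> \<sigma> powr (1 - \<alpha>) \<le> coef_c \<alpha> \<sigma> j 0"
    using c0 T1[OF a0 a1 s0(1)] by simp
  have B1: "coef_c \<alpha> \<sigma> j 1 \<le> AA \<alpha> \<sigma>" if "1 \<le> j" for j
  proof (cases "j = 1")
    case True
    then show ?thesis using T1[OF a0 a1 s0(1)] by (simp add: coef_c_def coef_a_eq coef_b_eq)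
  next
    case False
    then have "coef_c \<alpha> \<sigma> j 1 = AA \<alpha> \<sigma> + bb \<alpha> (\<sigma> + 1) - bb \<alpha> \<sigma>"
      using that by (simp add: coef_c_def coef_a_eq coef_b_eq add.commute)
    then show ?thesis using L6[OF a0 a1 s0(1)] by simp
  qed
  have B2: "AA \<alpha> \<sigma> \<le> (1 - \<alpha>) * \<sigma> powr (- \<alpha>)" using L78(2)[OF a0 a1 s0(1)] by (simp add: fd_def)
  have B3: "(1 - \<alpha>) * \<sigma> powr (- \<alpha>) \<le> \<sigma> powr (1 - \<alpha>)"
    unfolding pw using s0 pwpos by (intro mult_right_mono) auto
  show "coef_c \<alpha> \<sigma> j (s + 1) \<le> coef_c \<alpha> \<sigma> j s" if sj: "s < j" for j s
  proof (cases "s = 0")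
    case True
    have j1: "1 \<le> j" using sj by simp
    show ?thesis using B0[OF j1] B1[OF j1] B2 B3 True by simp
  next
    case False
    define x where "x = real s - 1 + \<sigma>"
    have x: "0 < x" using False xpos x_def by auto
    have e1: "real (s + 1) - 1 + \<sigma> = x + 1" "real (s + 2) - 1 + \<sigma> = x + 2" by (simp_all add: x_def)
    have cs: "coef_c \<alpha> \<sigma> j s = AA \<alpha> x + bb \<alpha> (x + 1) - bb \<alpha> x"
      using False sj by (simp add: coef_c_def coef_a_eq coef_b_eq x_def[symmetric] e1(1)[symmetric])
    show ?thesis
    proof (cases "s + 1 = j")
      case True
      then have "coef_c \<alpha> \<sigma> j (s + 1) = AA \<alpha> (x + 1) - bb \<alpha> (x + 1)"
        by (simp add: coef_c_def coef_a_eq coef_b_eq e1(1)[symmetric])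
      then show ?thesis using cs C_last[OF a0 a1 x] by simp
    next
      case False
      then have "coef_c \<alpha> \<sigma> j (s + 1) = AA \<alpha> (x + 1) + bb \<alpha> (x + 2) - bb \<alpha> (x + 1)"
        using sj by (simp add: coef_c_def coef_a_eq coef_b_eq e1[symmetric])
      then show ?thesis using cs C_interior[OF a0 a1 x] by simp
    qed
  qed
  show "(1 - \<alpha>) / 2 * (real j + \<sigma>) powr (- \<alpha>) \<le> coef_c \<alpha> \<sigma> j j" for j
  proof (cases "j = 0")
    case True
    have "(1 - \<alpha>) / 2 * \<sigma> powr (- \<alpha>) \<le> \<sigma> * \<sigma> powr (- \<alpha>)"
      using s0 pwpos by (intro mult_right_mono) auto
    then show ?thesis using True pw by (simp add: coef_c_def coef_a_def)
  next
    case False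
    define x where "x = real j - 1 + \<sigma>"
    have x: "0 < x" using False xpos x_def by auto
    have "coef_c \<alpha> \<sigma> j j = AA \<alpha> x - bb \<alpha> x"
      using False by (simp add: coef_c_def coef_a_eq coef_b_eq x_def)
    moreover have "fd \<alpha> (x + 1) = (1 - \<alpha>) * (real j + \<sigma>) powr (- \<alpha>)" by (simp add: fd_def x_def)
    ultimately show ?thesis using C_lastlow[OF a0 a1 x] by simp
  qed
  show "\<sigma>\<^sup>2 * coef_c \<alpha> \<sigma> j 1 \<le> (1 - \<alpha>) * coef_c \<alpha> \<sigma> j 0" if j: "1 \<le> j" for j
  proof -
    have "\<sigma>\<^sup>2 * coef_c \<alpha> \<sigma> j 1 \<le> \<sigma>\<^sup>2 * ((1 - \<alpha>) * \<sigma> powr (- \<alpha>))"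
      using B1[OF j] B2 by (intro mult_left_mono) auto
    also have "\<dots> = \<sigma> * ((1 - \<alpha>) * \<sigma> powr (1 - \<alpha>))" by (simp add: pw power2_eq_square)
    also have "\<dots> \<le> 1 * ((1 - \<alpha>) * \<sigma> powr (1 - \<alpha>))"
      using s0 a1 by (intro mult_right_mono) auto
    also have "\<dots> \<le> (1 - \<alpha>) * coef_c \<alpha> \<sigma> j 0" using B0[OF j] a1 by simp
    finally show ?thesis .
  qed
qed




lemma abel1:
  fixes lam A :: "nat \<Rightarrow> real"
  assumes A: "\<And>s. 0 \<le> A s" and l0: "0 \<le> lam 0"
    and mono: "\<And>s. s < Suc n \<Longrightarrow> lam s \<le> lam (Suc s)"
  shows "(lam (Suc n) - lam n) * A (Suc n) - lam (Suc n) * A (Suc (Suc n))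
         \<le> (\<Sum>s = 0..Suc n. lam s * (A s - A (Suc s)))"
  using mono
proof (induction n)
  case 0
  have "0 \<le> lam 0 * A 0" using A l0 by simp
  then show ?case by (simp add: algebra_simps)
next
  case (Suc n)
  have IH: "(lam (Suc n) - lam n) * A (Suc n) - lam (Suc n) * A (Suc (Suc n))
         \<le> (\<Sum>s = 0..Suc n. lam s * (A s - A (Suc s)))" using Suc by auto
  have "0 \<le> (lam (Suc n) - lam n) * A (Suc n)" using Suc.prems[of n] A by simp
  then show ?case using IH by (simp add: algebra_simps)
qed

lemma energy_scalar:
  fixes v lam :: "nat \<Rightarrow> real"
  assumes mono: "\<And>s. s < j \<Longrightarrow> lam s \<le> lam (Suc s)" and l0: "0 \<le> lam 0"
    and sg: "1/2 \<le> \<sigma>"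
    and top: "1 \<le> j \<Longrightarrow> lam j * (1 - \<sigma>)\<^sup>2 \<le> (lam j - lam (j - 1)) * \<sigma>\<^sup>2"
  shows "1/2 * (\<Sum>s = 0..j. lam s * ((v (Suc s))\<^sup>2 - (v s)\<^sup>2))
         \<le> (\<sigma> * v (Suc j) + (1 - \<sigma>) * v j) * (\<Sum>s = 0..j. lam s * (v (Suc s) - v s))"
proof -
  define vs where "vs = \<sigma> * v (Suc j) + (1 - \<sigma>) * v j"
  define u where "u = (\<lambda>s. (vs - v s)\<^sup>2)"
  have eq: "vs * (\<Sum>s = 0..j. lam s * (v (Suc s) - v s)) - 1/2 * (\<Sum>s = 0..j. lam s * ((v (Suc s))\<^sup>2 - (v s)\<^sup>2))
      = 1/2 * (\<Sum>s = 0..j. lam s * (u s - u (Suc s)))"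
    by (simp add: sum_distrib_left sum_subtractf[symmetric] u_def power2_eq_square algebra_simps)
  have w: "u j = \<sigma>\<^sup>2 * (v (Suc j) - v j)\<^sup>2" "u (Suc j) = (1 - \<sigma>)\<^sup>2 * (v (Suc j) - v j)\<^sup>2"
    by (simp_all add: u_def vs_def power2_eq_square algebra_simps)
  have "0 \<le> (\<Sum>s = 0..j. lam s * (u s - u (Suc s)))"
  proof (cases j)
    case 0
    have "(1 - \<sigma>)\<^sup>2 \<le> \<sigma>\<^sup>2" using sg by (simp add: power2_eq_square algebra_simps)
    then have "(1 - \<sigma>)\<^sup>2 * (v (Suc 0) - v 0)\<^sup>2 \<le> \<sigma>\<^sup>2 * (v (Suc 0) - v 0)\<^sup>2"
      by (intro mult_right_mono) auto
    then have "0 \<le> lam 0 * (u 0 - u (Suc 0))" using w 0 l0 by (intro mult_nonneg_nonneg) auto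
    then show ?thesis using 0 by simp
  next
    case (Suc n)
    have "(lam (Suc n) - lam n) * u (Suc n) - lam (Suc n) * u (Suc (Suc n))
         \<le> (\<Sum>s = 0..Suc n. lam s * (u s - u (Suc s)))"
      by (rule abel1) (use mono l0 Suc in \<open>auto simp: u_def\<close>)
    moreover have "0 \<le> (lam (Suc n) - lam n) * u (Suc n) - lam (Suc n) * u (Suc (Suc n))"
    proof -
      have "lam j * (1 - \<sigma>)\<^sup>2 * (v (Suc j) - v j)\<^sup>2 \<le> (lam j - lam (j - 1)) * \<sigma>\<^sup>2 * (v (Suc j) - v j)\<^sup>2"
        using top Suc by (intro mult_right_mono) auto
      then show ?thesis using w Suc by (simp add: algebra_simps)
    qed
    ultimately show ?thesis unfolding Suc by linarith
  qed
  then have "0 \<le> vs * (\<Sum>s = 0..j. lam s * (v (Suc s) - v s)) - 1/2 * (\<Sum>s = 0..j. lam s * ((v (Suc s))\<^sup>2 - (v s)\<^sup>2))"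
    using eq by simp
  then show ?thesis by (simp add: vs_def)
qed

lemma abel2:
  fixes lam E :: "nat \<Rightarrow> real"
  assumes mono: "\<And>s. s < n \<Longrightarrow> lam s \<le> lam (Suc s)" and EB: "\<And>s. s \<le> n \<Longrightarrow> E s \<le> B"
  shows "lam n * E (Suc n) - (lam n - lam 0) * B - lam 0 * E 0 \<le> (\<Sum>s = 0..n. lam s * (E (Suc s) - E s))"
  using mono EB
proof (induction n)
  case 0
  then show ?case by (simp add: algebra_simps)
next
  case (Suc n)
  have IH: "lam n * E (Suc n) - (lam n - lam 0) * B - lam 0 * E 0 \<le> (\<Sum>s = 0..n. lam s * (E (Suc s) - E s))"
    using Suc by auto
  have "(lam (Suc n) - lam n) * E (Suc n) \<le> (lam (Suc n) - lam n) * B"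
    using Suc.prems by (intro mult_left_mono) auto
  then show ?case using IH by (simp add: algebra_simps)
qed

lemma gronwall:
  fixes kap :: "nat \<Rightarrow> nat \<Rightarrow> real" and E :: "nat \<Rightarrow> real"
  assumes m: "0 < m" and G: "0 \<le> G"
    and mono: "\<And>j s. j < J \<Longrightarrow> s < j \<Longrightarrow> kap j (Suc s) \<le> kap j s"
    and low: "\<And>j. j < J \<Longrightarrow> m \<le> kap j j"
    and ineq: "\<And>j. j < J \<Longrightarrow> (\<Sum>s = 0..j. kap j (j - s) * (E (Suc s) - E s)) \<le> G"
  shows "j \<le> J \<Longrightarrow> E j \<le> E 0 + G / m"
proof (induction j rule: less_induct)
  case (less j)
  show ?case
  proof (cases j)
    case 0
    then show ?thesis using m G by simp
  next
    case (Suc k)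
    have kJ: "k < J" using less.prems Suc by simp
    define B where "B = E 0 + G / m"
    have EB: "E s \<le> B" if "s \<le> k" for s using less.IH[of s] that Suc less.prems by (simp add: B_def)
    have chain: "kap k r \<le> kap k 0" if "r \<le> k" for r
      using that
    proof (induction r)
      case 0 then show ?case by simp
    next
      case (Suc r) then show ?case using mono[OF kJ, of r] by simp
    qed
    have mm: "kap k (k - s) \<le> kap k (k - Suc s)" if "s < k" for s
    proof -
      have "Suc (k - Suc s) = k - s" using that by simp
      then show ?thesis using mono[OF kJ, of "k - Suc s"] that by simp
    qed
    have A2: "kap k (k - k) * E (Suc k) - (kap k (k - k) - kap k (k - 0)) * B - kap k (k - 0) * E 0
        \<le> (\<Sum>s = 0..k. kap k (k - s) * (E (Suc s) - E s))"
      by (rule abel2[where lam = "\<lambda>s. kap k (k - s)"])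
        (use EB mm in auto)
    have k0: "m \<le> kap k 0" using chain[of k] low[OF kJ] by simp
    have kk: "m \<le> kap k k" using low[OF kJ] .
    have main: "kap k 0 * E (Suc k) \<le> G + (kap k 0 - kap k k) * B + kap k k * E 0"
      using A2 ineq[OF kJ] by simp
    have "G = m * (G / m)" using m by simp
    also have "\<dots> \<le> kap k k * (G / m)" using kk G m by (intro mult_right_mono) auto
    finally have "G \<le> kap k k * (G / m)" .
    then have "kap k 0 * E (Suc k) \<le> kap k 0 * B" using main by (simp add: B_def algebra_simps)
    then have "E (Suc k) \<le> B" using k0 m by (simp add: mult_le_cancel_left)
    then show ?thesis using Suc by (simp add: B_def)
  qed
qed




lemma sbp:
  fixes z :: "nat \<Rightarrow> real"
  assumes z0: "z 0 = 0"
  shows "(\<Sum>i = 1..m. (z (i + 1) - 2 * z i + z (i - 1)) * z i)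
       = - (\<Sum>k = 1..Suc m. (z k - z (k - 1))\<^sup>2) + (z (Suc m) - z m) * z (Suc m)"
proof (induction m)
  case 0
  then show ?case using z0 by (simp add: power2_eq_square algebra_simps)
next
  case (Suc m)
  then show ?case by (simp add: power2_eq_square algebra_simps)
qed

lemma d2sq:
  fixes z :: "nat \<Rightarrow> real"
  shows "(\<Sum>i = 1..m. (z (i + 1) - 2 * z i + z (i - 1))\<^sup>2)
       \<le> 4 * (\<Sum>k = 1..Suc m. (z k - z (k - 1))\<^sup>2) - 2 * (z (Suc m) - z m)\<^sup>2"
proof (induction m)
  case 0
  then show ?case by simp
next
  case (Suc m)
  have "(z (Suc m + 1) - 2 * z (Suc m) + z (Suc m - 1))\<^sup>2
      \<le> 2 * (z (Suc (Suc m)) - z (Suc m))\<^sup>2 + 2 * (z (Suc m) - z m)\<^sup>2"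
  proof -
    have "0 \<le> ((z (Suc (Suc m)) - z (Suc m)) + (z (Suc m) - z m))\<^sup>2" by simp
    then show ?thesis by (simp add: power2_eq_square algebra_simps)
  qed
  then show ?case using Suc by simp
qed

lemma shift_sq:
  fixes z :: "nat \<Rightarrow> real"
  assumes z0: "z 0 = 0"
  shows "(\<Sum>i = 1..m. (z (i - 1))\<^sup>2 + (z (i + 1))\<^sup>2) \<le> 2 * (\<Sum>i = 1..m. (z i)\<^sup>2) + (z (Suc m))\<^sup>2 - (z m)\<^sup>2"
proof (induction m)
  case 0
  then show ?case using z0 by simp
next
  case (Suc m)
  then show ?case by simp
qed

lemma Hsq_le:
  fixes a b c :: real
  shows "((a + 10 * b + c) / 12)\<^sup>2 \<le> (a\<^sup>2 + 10 * b\<^sup>2 + c\<^sup>2) / 12"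
proof -
  have "0 \<le> 10 * (a - b)\<^sup>2 + 10 * (b - c)\<^sup>2 + (a - c)\<^sup>2" by simp
  then show ?thesis by (simp add: power2_eq_square field_simps)
qed

lemma poinc_pt:
  fixes z :: "nat \<Rightarrow> real"
  assumes z0: "z 0 = 0"
  shows "(z i)\<^sup>2 \<le> real i * (\<Sum>k = 1..i. (z k - z (k - 1))\<^sup>2)"
proof (induction i)
  case 0
  then show ?case using z0 by simp
next
  case (Suc i)
  define a where "a = z i"
  define d where "d = z (Suc i) - z i"
  define S where "S = (\<Sum>k = 1..i. (z k - z (k - 1))\<^sup>2)"
  have S0: "0 \<le> S" unfolding S_def by (intro sum_nonneg) auto
  have IH: "a\<^sup>2 \<le> real i * S" using Suc by (simp add: a_def S_def)
  have zs: "z (Suc i) = a + d" by (simp add: a_def d_def)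
  have sumS: "(\<Sum>k = 1..Suc i. (z k - z (k - 1))\<^sup>2) = S + d\<^sup>2" by (simp add: S_def d_def)
  show ?case
  proof (cases "i = 0")
    case True
    then show ?thesis using z0 by (simp add: sumS zs a_def)
  next
    case False
    then have ip: "0 < real i" by simp
    have "real i * (a + d)\<^sup>2 \<le> real i * (a + d)\<^sup>2 + (a - real i * d)\<^sup>2" by simp
    also have "\<dots> = (real i + 1) * a\<^sup>2 + real i * (real i + 1) * d\<^sup>2"
      by (simp add: power2_eq_square algebra_simps)
    also have "\<dots> \<le> (real i + 1) * (real i * S) + real i * (real i + 1) * d\<^sup>2"
      using IH by (intro add_right_mono mult_left_mono) auto
    also have "\<dots> = real i * ((real i + 1) * (S + d\<^sup>2))" by (simp add: algebra_simps)
    finally have "(a + d)\<^sup>2 \<le> (real i + 1) * (S + d\<^sup>2)" using ip by (simp add: mult_le_cancel_left)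
    then have "(a + d)\<^sup>2 \<le> real (Suc i) * (S + d\<^sup>2)" by (metis add.commute of_nat_Suc)
    then show ?thesis unfolding sumS zs .
  qed
qed

lemma gauss_real: "(\<Sum>i = 1..m. real i) = real m * (real m + 1) / 2"
  by (induction m) (auto simp: field_simps)

lemma poinc:
  fixes z :: "nat \<Rightarrow> real"
  assumes z0: "z 0 = 0"
  shows "(\<Sum>i = 1..m. (z i)\<^sup>2) \<le> real (Suc m)^2 / 2 * (\<Sum>k = 1..Suc m. (z k - z (k - 1))\<^sup>2)"
proof -
  define Q where "Q = (\<Sum>k = 1..Suc m. (z k - z (k - 1))\<^sup>2)"
  have "(\<Sum>i = 1..m. (z i)\<^sup>2) \<le> (\<Sum>i = 1..m. real i * Q)"
  proof (rule sum_mono)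
    fix i assume i: "i \<in> {1..m}"
    have "(\<Sum>k = 1..i. (z k - z (k - 1))\<^sup>2) \<le> Q"
      unfolding Q_def using i by (intro sum_mono2) auto
    then show "(z i)\<^sup>2 \<le> real i * Q" using poinc_pt[of z i, OF z0] by (meson mult_left_mono of_nat_0_le_iff order_trans)
  qed
  also have "\<dots> = (\<Sum>i = 1..m. real i) * Q" by (rule sum_distrib_right[symmetric])
  also have "\<dots> = real m * (real m + 1) / 2 * Q" by (simp only: gauss_real)
  also have "\<dots> \<le> real (Suc m)^2 / 2 * Q"
  proof -
    have "0 \<le> Q" unfolding Q_def by (intro sum_nonneg) auto
    moreover have "real m * (real m + 1) / 2 \<le> real (Suc m)^2 / 2" by (simp add: power2_eq_square algebra_simps)
    ultimately show ?thesis by (intro mult_right_mono) auto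
  qed
  finally show ?thesis by (simp add: Q_def)
qed

lemma spatial:
  fixes z :: "nat \<Rightarrow> real" and h l :: real and N :: nat
  assumes h: "0 < h" and N: "1 \<le> N" and l: "l = real N * h"
    and z0: "z 0 = 0" and zN: "z N = 0"
  shows "(\<Sum>i = 1..N - 1. dxx h z i * Hh h z i * h)
       \<le> - (4 / (3 * l\<^sup>2)) * (\<Sum>i = 1..N - 1. Hh h z i * Hh h z i * h)"
proof -
  obtain m where m: "N = Suc m" using N by (cases N) auto
  define Q where "Q = (\<Sum>k = 1..Suc m. (z k - z (k - 1))\<^sup>2)"
  define d2 where "d2 = (\<lambda>i. z (i + 1) - 2 * z i + z (i - 1))"
  have Q0: "0 \<le> Q" unfolding Q_def by (intro sum_nonneg) auto
  have zS: "z (Suc m) = 0" using zN m by simp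
  have e1: "(\<Sum>i = 1..m. d2 i * z i) = - Q" using sbp[of z m, OF z0] zS by (simp add: d2_def Q_def)
  have e2: "(\<Sum>i = 1..m. (d2 i)\<^sup>2) \<le> 4 * Q" using d2sq[of z m] unfolding d2_def Q_def
    by (smt (verit) zero_le_power2)
  have dxx_eq: "dxx h z i = d2 i / h\<^sup>2" for i by (simp add: dxx_def d2_def)
  have H_eq: "Hh h z i = z i + d2 i / 12" for i using h by (simp add: Hh_def dxx_eq)
  have H_eq2: "Hh h z i = (z (i - 1) + 10 * z i + z (i + 1)) / 12" for i
    by (simp add: H_eq d2_def field_simps)
  have "(\<Sum>i = 1..m. dxx h z i * Hh h z i * h) = (\<Sum>i = 1..m. (d2 i * z i + (d2 i)\<^sup>2 / 12) / h)"
    using h by (intro sum.cong) (auto simp: dxx_eq H_eq power2_eq_square field_simps)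
  also have "\<dots> = ((\<Sum>i = 1..m. d2 i * z i) + (\<Sum>i = 1..m. (d2 i)\<^sup>2) / 12) / h"
    by (simp add: sum_divide_distrib[symmetric] sum.distrib)
  also have "\<dots> \<le> (- Q + 4 * Q / 12) / h" unfolding e1 using e2 h by (intro divide_right_mono) auto
  finally have L: "(\<Sum>i = 1..m. dxx h z i * Hh h z i * h) \<le> - (2/3) * Q / h" by simp
  have "(\<Sum>i = 1..m. Hh h z i * Hh h z i) \<le> (\<Sum>i = 1..m. ((z (i - 1))\<^sup>2 + (z (i + 1))\<^sup>2 + 10 * (z i)\<^sup>2) / 12)"
    by (intro sum_mono) (use Hsq_le in \<open>auto simp: H_eq2 power2_eq_square[symmetric] add.commute add.left_commute\<close>)
  also have "\<dots> = ((\<Sum>i = 1..m. (z (i - 1))\<^sup>2 + (z (i + 1))\<^sup>2) + 10 * (\<Sum>i = 1..m. (z i)\<^sup>2)) / 12"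
    by (simp add: sum_divide_distrib[symmetric] sum.distrib sum_distrib_left)
  also have "\<dots> \<le> (2 * (\<Sum>i = 1..m. (z i)\<^sup>2) + 10 * (\<Sum>i = 1..m. (z i)\<^sup>2)) / 12"
  proof -
    have "(\<Sum>i = 1..m. (z (i - 1))\<^sup>2 + (z (i + 1))\<^sup>2) \<le> 2 * (\<Sum>i = 1..m. (z i)\<^sup>2)"
      using shift_sq[of z m, OF z0] zero_le_power2[of "z m"] zS by (simp only: zS power2_eq_square mult_zero_left)
    then show ?thesis by (intro divide_right_mono) auto
  qed
  also have "\<dots> = (\<Sum>i = 1..m. (z i)\<^sup>2)" by simp
  also have "\<dots> \<le> real N ^ 2 / 2 * Q" using poinc[of z m, OF z0] m by (simp add: Q_def)
  finally have R: "(\<Sum>i = 1..m. Hh h z i * Hh h z i) \<le> real N ^ 2 / 2 * Q" .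
  have "(4 / (3 * l\<^sup>2)) * (\<Sum>i = 1..m. Hh h z i * Hh h z i * h)
      = (4 / (3 * l\<^sup>2)) * h * (\<Sum>i = 1..m. Hh h z i * Hh h z i)"
  proof -
    have "(\<Sum>i = 1..m. Hh h z i * Hh h z i * h) = h * (\<Sum>i = 1..m. Hh h z i * Hh h z i)"
      by (simp add: sum_distrib_left mult.commute)
    then show ?thesis by simp
  qed
  also have "\<dots> \<le> (4 / (3 * l\<^sup>2)) * h * (real N ^ 2 / 2 * Q)"
    using R h l N by (intro mult_left_mono) auto
  also have "\<dots> = (2/3) * Q / h" using h N by (simp add: l power2_eq_square field_simps)
  finally show ?thesis using L m by simp
qed




lemma level_ineq:
  fixes W :: "nat \<Rightarrow> nat \<Rightarrow> real" and V Phi Dx lam :: "nat \<Rightarrow> real"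
  assumes K: "0 < K" and h: "0 < h" and c1: "0 < c1" and be: "0 < \<beta>" and a: "c1 \<le> a" and d: "0 \<le> d"
    and scal: "\<And>i. i \<in> {1..n} \<Longrightarrow> 1/2 * (\<Sum>s = 0..j. lam s * ((W (Suc s) i)\<^sup>2 - (W s i)\<^sup>2))
                 \<le> V i * (\<Sum>s = 0..j. lam s * (W (Suc s) i - W s i))"
    and eqn: "\<And>i. i \<in> {1..n} \<Longrightarrow> K * (\<Sum>s = 0..j. lam s * (W (Suc s) i - W s i)) = a * Dx i - d * V i + Phi i"
    and spat: "(\<Sum>i = 1..n. Dx i * V i * h) \<le> - \<beta> * (\<Sum>i = 1..n. V i * V i * h)"
  shows "(\<Sum>s = 0..j. lam s * ((\<Sum>i = 1..n. W (Suc s) i * W (Suc s) i * h) - (\<Sum>i = 1..n. W s i * W s i * h)))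
         \<le> (\<Sum>i = 1..n. Phi i * Phi i * h) / (2 * c1 * \<beta> * K)"
proof -
  define X where "X = (\<Sum>i = 1..n. V i * V i * h)"
  define Y where "Y = (\<Sum>i = 1..n. Phi i * Phi i * h)"
  have X0: "0 \<le> X" unfolding X_def using h by (intro sum_nonneg) auto
  have swap: "(\<Sum>s = 0..j. lam s * ((\<Sum>i = 1..n. W (Suc s) i * W (Suc s) i * h) - (\<Sum>i = 1..n. W s i * W s i * h)))
      = (\<Sum>i = 1..n. h * (\<Sum>s = 0..j. lam s * ((W (Suc s) i)\<^sup>2 - (W s i)\<^sup>2)))"
    by (simp add: sum_subtractf[symmetric] sum_distrib_left sum_distrib_right power2_eq_square algebra_simps
        sum.swap[of _ "{0..j}"])
  have "K / 2 * (\<Sum>i = 1..n. h * (\<Sum>s = 0..j. lam s * ((W (Suc s) i)\<^sup>2 - (W s i)\<^sup>2)))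
      = (\<Sum>i = 1..n. h * K * (1/2 * (\<Sum>s = 0..j. lam s * ((W (Suc s) i)\<^sup>2 - (W s i)\<^sup>2))))"
    by (simp add: sum_distrib_left algebra_simps)
  also have "\<dots> \<le> (\<Sum>i = 1..n. h * K * (V i * (\<Sum>s = 0..j. lam s * (W (Suc s) i - W s i))))"
    using h K scal by (intro sum_mono mult_left_mono) auto
  also have "\<dots> = (\<Sum>i = 1..n. h * V i * (a * Dx i - d * V i + Phi i))"
  proof (intro sum.cong refl)
    fix i assume i: "i \<in> {1..n}"
    have "h * K * (V i * (\<Sum>s = 0..j. lam s * (W (Suc s) i - W s i)))
        = h * V i * (K * (\<Sum>s = 0..j. lam s * (W (Suc s) i - W s i)))" by (simp add: algebra_simps)
    then show "h * K * (V i * (\<Sum>s = 0..j. lam s * (W (Suc s) i - W s i))) = h * V i * (a * Dx i - d * V i + Phi i)"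
      using eqn[OF i] by simp
  qed
  also have "\<dots> = a * (\<Sum>i = 1..n. Dx i * V i * h) - d * X + (\<Sum>i = 1..n. Phi i * V i * h)"
    by (simp add: X_def sum_distrib_left sum.distrib sum_subtractf algebra_simps)
  also have "\<dots> \<le> a * (- \<beta> * X) - 0 + (\<Sum>i = 1..n. (c1 * \<beta> * (V i * V i) + (Phi i * Phi i) / (4 * c1 * \<beta>)) * h)"
  proof -
    have 1: "a * (\<Sum>i = 1..n. Dx i * V i * h) \<le> a * (- \<beta> * X)"
      using spat a c1 by (intro mult_left_mono) (auto simp: X_def)
    have 2: "0 \<le> d * X" using d X0 by simp
    have 3: "Phi i * V i \<le> c1 * \<beta> * (V i * V i) + (Phi i * Phi i) / (4 * c1 * \<beta>)" for i
    proof -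
      have pos: "0 < 4 * c1 * \<beta>" using c1 be by simp
      have "0 \<le> (2 * c1 * \<beta> * V i - Phi i)\<^sup>2" by simp
      then have "4 * c1 * \<beta> * (Phi i * V i) \<le> 4 * c1 * \<beta> * (c1 * \<beta> * (V i * V i)) + Phi i * Phi i"
        by (simp add: power2_eq_square algebra_simps)
      then have "(Phi i * V i - c1 * \<beta> * (V i * V i)) * (4 * c1 * \<beta>) \<le> Phi i * Phi i"
        by (simp add: algebra_simps)
      then have "Phi i * V i - c1 * \<beta> * (V i * V i) \<le> Phi i * Phi i / (4 * c1 * \<beta>)"
        using pos_le_divide_eq[OF pos] by blast
      then show ?thesis by linarith
    qed
    have "(\<Sum>i = 1..n. Phi i * V i * h) \<le> (\<Sum>i = 1..n. (c1 * \<beta> * (V i * V i) + (Phi i * Phi i) / (4 * c1 * \<beta>)) * h)"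
      using 3 h by (intro sum_mono mult_right_mono) auto
    with 1 2 show ?thesis by linarith
  qed
  also have "\<dots> = - (a - c1) * \<beta> * X + Y / (4 * c1 * \<beta>)"
  proof -
    have "(\<Sum>i = 1..n. (c1 * \<beta> * (V i * V i) + (Phi i * Phi i) / (4 * c1 * \<beta>)) * h)
        = (\<Sum>i = 1..n. c1 * \<beta> * (V i * V i * h)) + (\<Sum>i = 1..n. (Phi i * Phi i * h) / (4 * c1 * \<beta>))"
      unfolding sum.distrib[symmetric] by (intro sum.cong) (auto simp: field_simps)
    also have "\<dots> = c1 * \<beta> * X + Y / (4 * c1 * \<beta>)"
      by (simp add: X_def Y_def sum_distrib_left sum_divide_distrib)
    finally show ?thesis by (simp add: algebra_simps)
  qed
  also have "\<dots> \<le> Y / (4 * c1 * \<beta>)"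
  proof -
    have "0 \<le> (a - c1) * \<beta> * X" using a be X0 by simp
    then have "- (a - c1) * \<beta> * X \<le> 0" by linarith
    then show ?thesis by linarith
  qed
  finally have "K / 2 * (\<Sum>i = 1..n. h * (\<Sum>s = 0..j. lam s * ((W (Suc s) i)\<^sup>2 - (W s i)\<^sup>2))) \<le> Y / (4 * c1 * \<beta>)" .
  then have "(\<Sum>i = 1..n. h * (\<Sum>s = 0..j. lam s * ((W (Suc s) i)\<^sup>2 - (W s i)\<^sup>2))) \<le> Y / (2 * c1 * \<beta> * K)"
    using K c1 be by (simp add: field_simps)
  then show ?thesis unfolding swap Y_def .
qed


lemma Hh_lin: "Hh h (\<lambda>i'. p * u i' + q * w i') i = p * Hh h u i + q * Hh h w i"
  by (cases "h = 0") (simp_all add: Hh_def dxx_def field_simps)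

theorem theorem4:
  fixes \<alpha> \<sigma> l T h \<tau> c1 :: real
    and N M :: nat
    and k q :: "real \<Rightarrow> real"
    and f :: "real \<Rightarrow> real \<Rightarrow> real"
    and u0 :: "real \<Rightarrow> real"
    and y :: "nat \<Rightarrow> nat \<Rightarrow> real"
  assumes "0 < \<alpha>" "\<alpha> < 1" "\<sigma> = 1 - \<alpha> / 2"
    and "0 < l" "0 < T" "1 \<le> N" "1 \<le> M"
    and h_def: "h = l / real N" and tau_def: "\<tau> = T / real M"
    and "0 < c1"
    and "continuous_on {0..T} k" "\<forall>t\<in>{0..T}. c1 \<le> k t"
    and "continuous_on {0..T} q" "\<forall>t\<in>{0..T}. 0 \<le> q t"
    and "continuous_on ({0..l} \<times> {0..T}) (\<lambda>(x, t). f x t)"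
    and scheme: "\<forall>j < M. \<forall>i. 1 \<le> i \<and> i \<le> N - 1 \<longrightarrow>
        frac_deriv \<alpha> \<sigma> \<tau> j (\<lambda>s. Hh h (y s) i)
          = k ((real j + \<sigma>) * \<tau>) * dxx h (\<lambda>i'. \<sigma> * y (j + 1) i' + (1 - \<sigma>) * y j i') i
            - q ((real j + \<sigma>) * \<tau>) * Hh h (\<lambda>i'. \<sigma> * y (j + 1) i' + (1 - \<sigma>) * y j i') i
            + Hh h (\<lambda>i'. f (real i' * h) ((real j + \<sigma>) * \<tau>)) i"
    and bdry: "\<forall>j \<le> M. y j 0 = 0 \<and> y j N = 0"
    and init: "\<forall>i. 1 \<le> i \<and> i \<le> N - 1 \<longrightarrow> y 0 i = u0 (real i * h)"
  shows "\<forall>j < M.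
     norm0sq h N (Hh h (y (j + 1)))
       \<le> norm0sq h N (Hh h (y 0))
         + l ^ 2 * T powr \<alpha> * Gamma (1 - \<alpha>) / c1 *
           Max ((\<lambda>j'. norm0sq h N (Hh h (\<lambda>i. f (real i * h) ((real j' - 1 + \<sigma>) * \<tau>))))
                  ` {1..M})"
proof -
  note a0 = assms(1) and a1 = assms(2) and sg = assms(3) and l0 = assms(4) and T0 = assms(5)
    and N1 = assms(6) and M1 = assms(7) and c10 = assms(10) and kb = assms(12) and qb = assms(14)
  have s0: "0 < \<sigma>" "1/2 \<le> \<sigma>" "\<sigma> \<le> 1" using a0 a1 sg by auto
  have hpos: "0 < h" using l0 N1 h_def by simp
  have taupos: "0 < \<tau>" using T0 M1 tau_def by simp
  have lN: "l = real N * h" using N1 h_def by simp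
  have TM: "T = real M * \<tau>" using M1 tau_def by simp
  define W where "W = (\<lambda>s i. Hh h (y s) i)"
  define E where "E = (\<lambda>s. norm0sq h N (W s))"
  define Phi where "Phi = (\<lambda>j i. Hh h (\<lambda>i'. f (real i' * h) ((real j + \<sigma>) * \<tau>)) i)"
  define Pmax where "Pmax = Max ((\<lambda>j'. norm0sq h N (Hh h (\<lambda>i. f (real i * h) ((real j' - 1 + \<sigma>) * \<tau>)))) ` {1..M})"
  define K where "K = \<tau> powr (1 - \<alpha>) / Gamma (2 - \<alpha>) / \<tau>"
  define \<beta> where "\<beta> = 4 / (3 * l\<^sup>2)"
  define G where "G = Pmax / (2 * c1 * \<beta> * K)"
  define R where "R = real (M - 1) + \<sigma>"
  define m where "m = (1 - \<alpha>) / 2 * R powr (- \<alpha>)"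
  have Rpos: "0 < R" using s0 by (simp add: R_def)
  have g2pos: "0 < Gamma (2 - \<alpha>)" using a1 by simp
  have Kpos: "0 < K" using taupos g2pos by (simp add: K_def)
  have bpos: "0 < \<beta>" using l0 by (simp add: \<beta>_def)
  have mpos: "0 < m" using a1 Rpos by (simp add: m_def)
  have norm_nonneg: "0 \<le> norm0sq h N v" for v
    unfolding norm0sq_def dinner_def using hpos by (intro sum_nonneg) auto
  have Pmax_ge: "norm0sq h N (Phi j) \<le> Pmax" if "j < M" for j
  proof -
    have "real (j + 1) - 1 + \<sigma> = real j + \<sigma>" by simp
    then have "norm0sq h N (Phi j) = (\<lambda>j'. norm0sq h N (Hh h (\<lambda>i. f (real i * h) ((real j' - 1 + \<sigma>) * \<tau>)))) (j + 1)"
      by (simp add: Phi_def)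
    moreover have "j + 1 \<in> {1..M}" using that by simp
    ultimately have "norm0sq h N (Phi j) \<in> (\<lambda>j'. norm0sq h N (Hh h (\<lambda>i. f (real i * h) ((real j' - 1 + \<sigma>) * \<tau>)))) ` {1..M}"
      by (rule image_eqI)
    then show ?thesis unfolding Pmax_def by (intro Max_ge) auto
  qed
  have Pmax0: "0 \<le> Pmax" using Pmax_ge[of 0] M1 norm_nonneg[of "Phi 0"] by linarith
  have G0: "0 \<le> G" using Pmax0 c10 bpos Kpos by (simp add: G_def)
  have level: "(\<Sum>s = 0..j. coef_c \<alpha> \<sigma> j (j - s) * (E (Suc s) - E s)) \<le> G" if jM: "j < M" for j
  proof -
    define Y where "Y = (\<lambda>i'. \<sigma> * y (j + 1) i' + (1 - \<sigma>) * y j i')"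
    define lam where "lam = (\<lambda>s. coef_c \<alpha> \<sigma> j (j - s))"
    define t where "t = (real j + \<sigma>) * \<tau>"
    have tT: "t \<in> {0..T}"
    proof -
      have "real j + \<sigma> \<le> real M" using jM s0 by (simp add: of_nat_less_iff[symmetric])
      then have "t \<le> real M * \<tau>" unfolding t_def using taupos by (intro mult_right_mono) auto
      then show ?thesis using TM taupos s0 by (auto simp: t_def)
    qed
    have ka: "c1 \<le> k t" using kb tT by auto
    have qa: "0 \<le> q t" using qb tT by auto
    have VY: "Hh h Y i = \<sigma> * W (Suc j) i + (1 - \<sigma>) * W j i" for i
      unfolding Y_def W_def by (simp add: Hh_lin)
    have lam_mono: "lam s \<le> lam (Suc s)" if "s < j" for s
    proof -
      have "Suc (j - Suc s) = j - s" using that by simp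
      then show ?thesis using coef_facts(1)[OF a0 a1 sg, of "j - Suc s" j] that by (simp add: lam_def)
    qed
    have lam0: "0 \<le> lam 0"
    proof -
      have "0 \<le> (1 - \<alpha>) / 2 * (real j + \<sigma>) powr (- \<alpha>)" using a1 by simp
      then show ?thesis using coef_facts(2)[OF a0 a1 sg, of j] by (simp add: lam_def)
    qed
    have top: "lam j * (1 - \<sigma>)\<^sup>2 \<le> (lam j - lam (j - 1)) * \<sigma>\<^sup>2" if "1 \<le> j"
    proof -
      have "j - (j - 1) = 1" using that by simp
      then have "lam (j - 1) = coef_c \<alpha> \<sigma> j 1" by (simp add: lam_def)
      moreover have "lam j = coef_c \<alpha> \<sigma> j 0" by (simp add: lam_def)
      moreover have "\<sigma>\<^sup>2 * coef_c \<alpha> \<sigma> j 1 \<le> (1 - \<alpha>) * coef_c \<alpha> \<sigma> j 0"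
        using coef_facts(3)[OF a0 a1 sg that] .
      moreover have "1 - \<alpha> = \<sigma>\<^sup>2 - (1 - \<sigma>)\<^sup>2" using sg by (simp add: power2_eq_square algebra_simps)
      ultimately show ?thesis by (simp add: algebra_simps)
    qed
    have scal: "1/2 * (\<Sum>s = 0..j. lam s * ((W (Suc s) i)\<^sup>2 - (W s i)\<^sup>2))
                 \<le> Hh h Y i * (\<Sum>s = 0..j. lam s * (W (Suc s) i - W s i))" for i
      unfolding VY by (rule energy_scalar[where lam = lam and v = "\<lambda>s. W s i"]) (use lam_mono lam0 s0 top in auto)
    have eqn: "K * (\<Sum>s = 0..j. lam s * (W (Suc s) i - W s i))
        = k t * dxx h Y i - q t * Hh h Y i + Phi j i" if i: "i \<in> {1..N - 1}" for i
    proof -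
      have "frac_deriv \<alpha> \<sigma> \<tau> j (\<lambda>s. Hh h (y s) i) = K * (\<Sum>s = 0..j. lam s * (W (Suc s) i - W s i))"
        unfolding frac_deriv_def K_def lam_def W_def
        by (simp add: sum_divide_distrib[symmetric] sum_distrib_left)
      then show ?thesis using scheme jM i by (simp add: Y_def t_def Phi_def)
    qed
    have spat: "(\<Sum>i = 1..N - 1. dxx h Y i * Hh h Y i * h) \<le> - \<beta> * (\<Sum>i = 1..N - 1. Hh h Y i * Hh h Y i * h)"
    proof -
      have "Y 0 = 0" "Y N = 0" using bdry jM by (simp_all add: Y_def)
      then show ?thesis unfolding \<beta>_def using spatial[OF hpos N1 lN] by simp
    qed
    have LI: "(\<Sum>s = 0..j. lam s * ((\<Sum>i = 1..N - 1. W (Suc s) i * W (Suc s) i * h) - (\<Sum>i = 1..N - 1. W s i * W s i * h)))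
         \<le> (\<Sum>i = 1..N - 1. Phi j i * Phi j i * h) / (2 * c1 * \<beta> * K)"
      by (rule level_ineq[OF Kpos hpos c10 bpos ka qa scal eqn spat])
    have "(\<Sum>i = 1..N - 1. Phi j i * Phi j i * h) \<le> Pmax"
      using Pmax_ge[OF jM] by (simp add: norm0sq_def dinner_def Phi_def)
    then have "(\<Sum>i = 1..N - 1. Phi j i * Phi j i * h) / (2 * c1 * \<beta> * K) \<le> G"
      unfolding G_def using c10 bpos Kpos by (intro divide_right_mono) auto
    with LI show ?thesis by (simp add: E_def norm0sq_def dinner_def lam_def)
  qed
  have gron: "E j \<le> E 0 + G / m" if "j \<le> M" for j
  proof (rule gronwall[where kap = "coef_c \<alpha> \<sigma>" and J = M, OF mpos G0 _ _ level that])
    fix j s assume "j < M" "s < j"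
    then show "coef_c \<alpha> \<sigma> j (Suc s) \<le> coef_c \<alpha> \<sigma> j s" using coef_facts(1)[OF a0 a1 sg] by simp
  next
    fix j assume jM: "j < M"
    have "R powr (- \<alpha>) \<le> (real j + \<sigma>) powr (- \<alpha>)"
      using jM s0 a0 by (intro powr_mono2') (auto simp: R_def)
    then have "m \<le> (1 - \<alpha>) / 2 * (real j + \<sigma>) powr (- \<alpha>)" unfolding m_def using a1
      by (intro mult_left_mono) auto
    then show "m \<le> coef_c \<alpha> \<sigma> j j" using coef_facts(2)[OF a0 a1 sg, of j] by linarith
  qed
  have const: "G / m \<le> l ^ 2 * T powr \<alpha> * Gamma (1 - \<alpha>) / c1 * Pmax"
  proof -
    define g1 where "g1 = Gamma (1 - \<alpha>)"
    have g1pos: "0 < g1" using a1 by (simp add: g1_def)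
    have "1 - \<alpha> \<notin> \<int>\<^sub>\<le>\<^sub>0" using a1 by auto
    then have g2: "Gamma (2 - \<alpha>) = (1 - \<alpha>) * g1" using Gamma_plus1[of "1 - \<alpha>"] by (simp add: g1_def)
    have tp: "\<tau> powr (1 - \<alpha>) = \<tau> / \<tau> powr \<alpha>" using taupos by (simp add: powr_diff)
    have Rp: "R powr (- \<alpha>) = 1 / R powr \<alpha>" by (simp add: powr_minus_divide)
    have tpp: "0 < \<tau> powr \<alpha>" "0 < R powr \<alpha>" using taupos Rpos by auto
    have eq: "G / m = Pmax * (3 * l\<^sup>2 * (\<tau> powr \<alpha> * R powr \<alpha>) * g1 / (4 * c1))"
      unfolding G_def m_def K_def \<beta>_def g2 tp Rp using tpp taupos g1pos l0 c10 a1
      by (simp add: field_simps)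
    have "\<tau> * R \<le> T"
    proof -
      have "R \<le> real M" using M1 s0 by (simp add: R_def of_nat_diff)
      then show ?thesis using TM taupos by (simp add: mult.commute mult_left_mono)
    qed
    then have "\<tau> powr \<alpha> * R powr \<alpha> \<le> T powr \<alpha>"
      using taupos Rpos a0 by (simp add: powr_mult[symmetric] powr_mono2)
    then have "l\<^sup>2 * (\<tau> powr \<alpha> * R powr \<alpha>) * g1 \<le> l\<^sup>2 * T powr \<alpha> * g1"
      using g1pos by (intro mult_right_mono mult_left_mono) auto
    moreover have "0 \<le> l\<^sup>2 * (\<tau> powr \<alpha> * R powr \<alpha>) * g1" using tpp g1pos by simp
    ultimately have "3 * l\<^sup>2 * (\<tau> powr \<alpha> * R powr \<alpha>) * g1 \<le> 4 * (l\<^sup>2 * T powr \<alpha> * g1)" by linarith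
    then have "3 * l\<^sup>2 * (\<tau> powr \<alpha> * R powr \<alpha>) * g1 / (4 * c1) \<le> 4 * (l\<^sup>2 * T powr \<alpha> * g1) / (4 * c1)"
      using c10 by (intro divide_right_mono) auto
    then have "3 * l\<^sup>2 * (\<tau> powr \<alpha> * R powr \<alpha>) * g1 / (4 * c1) \<le> l ^ 2 * T powr \<alpha> * g1 / c1"
      by simp
    then have "Pmax * (3 * l\<^sup>2 * (\<tau> powr \<alpha> * R powr \<alpha>) * g1 / (4 * c1)) \<le> Pmax * (l ^ 2 * T powr \<alpha> * g1 / c1)"
      using Pmax0 by (rule mult_left_mono)
    then show ?thesis unfolding eq g1_def by (metis mult.commute)
  qed
  show ?thesis unfolding Pmax_def[symmetric]
  proof (intro allI impI)
    fix j assume "j < M"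
    then have "E (j + 1) \<le> E 0 + G / m" using gron by simp
    also have "\<dots> \<le> E 0 + l ^ 2 * T powr \<alpha> * Gamma (1 - \<alpha>) / c1 * Pmax" using const by simp
    finally show "norm0sq h N (Hh h (y (j + 1))) \<le> norm0sq h N (Hh h (y 0))
         + l ^ 2 * T powr \<alpha> * Gamma (1 - \<alpha>) / c1 * Pmax"
      by (simp add: E_def W_def)
  qed
qed

end
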